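(* Let $G$ be a $2$-vertex-connected, unambiguously weighted rooted graph with positive edge weights and root edge $e=t_1t_2$, let $C_1,C_2,\dots$ be a greedy cycle sequence for $G$, and let $A_i$ be its $i$th ambit. Let $x$ be a point of $A_i$ (either a vertex of $A_i$, or a point interior to an edge of $A_i$, modeled by subdividing that edge into two edges of positive weight summing to the original weight). Then $A_i$ contains the shortest path in $G$ from $x$ to $t_1$ and the shortest path in $G$ from $x$ to $t_2$.
   Context: A rooted graph is an undirected graph with a designated root edge $e$; a cycle (connected $2$-regular subgraph) is rooted if it contains $e$. Edges have positive real weights; the weight of a path or cycle is the sum of its edge weights, and shortest means of minimum weight. $G$ is unambiguously weighted if no two distinct paths have the same weight and no two distinct cycles have the same weight. A greedy cycle sequence is a sequence of rooted cycles $C_1,C_2,\dots$ such that (1) each $C_i$ contains an edge that is not in any of $C_1,\dots,C_{i-1}$, and (2) subject to (1), each $C_i$ has minimum possible weight among rooted cycles. The $i$th ambit $A_i$ is the subgraph of $G$ formed by all vertices and edges of $C_1,\dots,C_i$. *)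

theory Defs
  imports Complex_Main
begin

text \<open>Simple graphs: vertex set V, edge set E of two-element vertex sets,
  edge weights w. A subgraph given by an edge set F has vertex set the union of F.\<close>

definition wf_graph :: "'v set \<Rightarrow> 'v set set \<Rightarrow> bool" where
  "wf_graph V E \<longleftrightarrow> finite V \<and> E \<subseteq> {{a, b} | a b. a \<in> V \<and> b \<in> V \<and> a \<noteq> b}"

definition adj :: "'v set \<Rightarrow> 'v set set \<Rightarrow> ('v \<times> 'v) set" where
  "adj V E = {(a, b). a \<in> V \<and> b \<in> V \<and> {a, b} \<in> E}"

definition connected_graph :: "'v set \<Rightarrow> 'v set set \<Rightarrow> bool" where
  "connected_graph V E \<longleftrightarrow> V \<noteq> {} \<and> (\<forall>u\<in>V. \<forall>v\<in>V. (u, v) \<in> (adj V E)\<^sup>*)"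

definition two_connected :: "'v set \<Rightarrow> 'v set set \<Rightarrow> bool" where
  "two_connected V E \<longleftrightarrow> card V \<ge> 3 \<and> connected_graph V E \<and>
     (\<forall>z\<in>V. connected_graph (V - {z}) {f \<in> E. z \<notin> f})"

definition path_edges :: "'v list \<Rightarrow> 'v set set" where
  "path_edges p = {{p ! i, p ! Suc i} | i. Suc i < length p}"

definition is_path :: "'v set \<Rightarrow> 'v set set \<Rightarrow> 'v list \<Rightarrow> bool" where
  "is_path V E p \<longleftrightarrow> p \<noteq> [] \<and> distinct p \<and> set p \<subseteq> V \<and> path_edges p \<subseteq> E"

definition is_cycle :: "'v set set \<Rightarrow> 'v set set \<Rightarrow> bool" where
  "is_cycle E C \<longleftrightarrow> (\<exists>vs. distinct vs \<and> length vs \<ge> 3 \<and>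
       C = path_edges vs \<union> {{last vs, hd vs}}) \<and> C \<subseteq> E"

definition weight :: "('v set \<Rightarrow> real) \<Rightarrow> 'v set set \<Rightarrow> real" where
  "weight w F = sum w F"

definition positive_weights :: "'v set set \<Rightarrow> ('v set \<Rightarrow> real) \<Rightarrow> bool" where
  "positive_weights E w \<longleftrightarrow> (\<forall>f\<in>E. w f > 0)"

definition unambiguous :: "'v set \<Rightarrow> 'v set set \<Rightarrow> ('v set \<Rightarrow> real) \<Rightarrow> bool" where
  "unambiguous V E w \<longleftrightarrow>
     (\<forall>p q. is_path V E p \<and> is_path V E q \<and> length p \<ge> 2 \<and> length q \<ge> 2 \<and>
            path_edges p \<noteq> path_edges q \<longrightarrow> weight w (path_edges p) \<noteq> weight w (path_edges q)) \<and>
     (\<forall>C D. is_cycle E C \<and> is_cycle E D \<and> C \<noteq> D \<longrightarrow> weight w C \<noteq> weight w D)"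

definition rooted_cycle :: "'v set set \<Rightarrow> 'v set \<Rightarrow> 'v set set \<Rightarrow> bool" where
  "rooted_cycle E e C \<longleftrightarrow> is_cycle E C \<and> e \<in> C"

text \<open>Greedy cycle sequence C_1, C_2, ... (list index i corresponds to C_(i+1)).\<close>
definition greedy_cycle_seq ::
  "'v set set \<Rightarrow> 'v set \<Rightarrow> ('v set \<Rightarrow> real) \<Rightarrow> 'v set set list \<Rightarrow> bool" where
  "greedy_cycle_seq E e w Cs \<longleftrightarrow>
     (\<forall>i < length Cs.
        rooted_cycle E e (Cs ! i) \<and> \<not> Cs ! i \<subseteq> \<Union>(set (take i Cs)) \<and>
        (\<forall>D. rooted_cycle E e D \<and> \<not> D \<subseteq> \<Union>(set (take i Cs)) \<longrightarrow>
             weight w (Cs ! i) \<le> weight w D))"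

text \<open>Edge set of the i-th ambit A_i; its vertex set is the union of this edge set.\<close>
definition ambit :: "'v set set list \<Rightarrow> nat \<Rightarrow> 'v set set" where
  "ambit Cs i = \<Union>(set (take i Cs))"

definition shortest_path ::
  "'v set \<Rightarrow> 'v set set \<Rightarrow> ('v set \<Rightarrow> real) \<Rightarrow> 'v \<Rightarrow> 'v \<Rightarrow> 'v list \<Rightarrow> bool" where
  "shortest_path V E w x y p \<longleftrightarrow> is_path V E p \<and> hd p = x \<and> last p = y \<and>
     (\<forall>q. is_path V E q \<and> hd q = x \<and> last q = y \<longrightarrow>
          weight w (path_edges p) \<le> weight w (path_edges q))"

definition path_in :: "'v list \<Rightarrow> 'v set set \<Rightarrow> bool" where
  "path_in p F \<longleftrightarrow> set p \<subseteq> \<Union>F \<and> path_edges p \<subseteq> F"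

definition subdiv_edges :: "'v set set \<Rightarrow> 'v \<Rightarrow> 'v \<Rightarrow> 'v \<Rightarrow> 'v set set" where
  "subdiv_edges F u v z = (F - {{u, v}}) \<union> {{u, z}, {z, v}}"

definition subdiv_weight ::
  "('v set \<Rightarrow> real) \<Rightarrow> 'v \<Rightarrow> 'v \<Rightarrow> 'v \<Rightarrow> real \<Rightarrow> 'v set \<Rightarrow> real" where
  "subdiv_weight w u v z a = w({u, z} := a, {z, v} := w {u, v} - a)"

end

theory Submission
  imports Defs
begin


lemma pe_Nil[simp]: "path_edges [] = {}"
  by (simp add: path_edges_def)
lemma pe_single[simp]: "path_edges [a] = {}"
  by (simp add: path_edges_def)
lemma pe_Cons2[simp]: "path_edges (a # b # r) = insert {a, b} (path_edges (b # r))"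
proof -
  have "path_edges (a # b # r) = {{(a#b#r) ! i, (a#b#r) ! Suc i} | i. Suc i < length (a#b#r)}"
    by (simp add: path_edges_def)
  also have "\<dots> = insert {a,b} {{(b#r) ! i, (b#r) ! Suc i} | i. Suc i < length (b#r)}"
  proof (rule set_eqI, rule iffI)
    fix f assume "f \<in> {{(a#b#r) ! i, (a#b#r) ! Suc i} | i. Suc i < length (a#b#r)}"
    then obtain i where f: "f = {(a#b#r) ! i, (a#b#r) ! Suc i}" "Suc i < length (a#b#r)" by blast
    show "f \<in> insert {a,b} {{(b#r) ! i, (b#r) ! Suc i} | i. Suc i < length (b#r)}"
    proof (cases i)
      case 0 then show ?thesis using f by simp
    next
      case (Suc j) then show ?thesis using f by auto
    qed
  next
    fix f assume "f \<in> insert {a,b} {{(b#r) ! i, (b#r) ! Suc i} | i. Suc i < length (b#r)}"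
    then show "f \<in> {{(a#b#r) ! i, (a#b#r) ! Suc i} | i. Suc i < length (a#b#r)}"
    proof
      assume "f = {a,b}" then show ?thesis by (rule_tac CollectI, rule_tac x=0 in exI) simp
    next
      assume "f \<in> {{(b#r) ! i, (b#r) ! Suc i} | i. Suc i < length (b#r)}"
      then obtain i where f: "f = {(b#r) ! i, (b#r) ! Suc i}" "Suc i < length (b#r)" by blast
      then show ?thesis by (rule_tac CollectI, rule_tac x="Suc i" in exI) simp
    qed
  qed
  also have "\<dots> = insert {a, b} (path_edges (b # r))" by (simp add: path_edges_def)
  finally show ?thesis .
qed

lemma pe_Cons: "ys \<noteq> [] \<Longrightarrow> path_edges (a # ys) = insert {a, hd ys} (path_edges ys)"
  by (cases ys) auto

lemma pe_mid: "path_edges (xs @ z # ys) = path_edges (xs @ [z]) \<union> path_edges (z # ys)"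
proof (induction xs)
  case Nil then show ?case by simp
next
  case (Cons x xs) then show ?case by (cases xs) auto
qed

lemma pe_snoc: "xs \<noteq> [] \<Longrightarrow> path_edges (xs @ [x]) = insert {last xs, x} (path_edges xs)"
proof -
  assume "xs \<noteq> []"
  then have "xs = butlast xs @ [last xs]" by simp
  then have "path_edges (xs @ [x]) = path_edges (butlast xs @ last xs # [x])" by (metis append.assoc append_Cons append_Nil)
  also have "\<dots> = path_edges xs \<union> path_edges [last xs, x]"
    using pe_mid[of "butlast xs" "last xs" "[x]"] \<open>xs = butlast xs @ [last xs]\<close> by simp
  finally show ?thesis by simp
qed

lemma pe_rev[simp]: "path_edges (rev xs) = path_edges xs"
proof (induction xs)
  case Nil then show ?case by simp
next
  case (Cons x xs)
  show ?case
  proof (cases "xs = []")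
    case True then show ?thesis by simp
  next
    case False
    then have "path_edges (rev (x#xs)) = insert {last (rev xs), x} (path_edges (rev xs))"
      by (simp add: pe_snoc)
    also have "\<dots> = insert {x, hd xs} (path_edges xs)" using Cons False
      by (simp add: last_rev insert_commute)
    finally show ?thesis using False by (simp add: pe_Cons)
  qed
qed

lemma pe_edge: "f \<in> path_edges xs \<Longrightarrow> \<exists>a b. f = {a,b} \<and> a \<in> set xs \<and> b \<in> set xs \<and> (distinct xs \<longrightarrow> a \<noteq> b)"
proof -
  assume "f \<in> path_edges xs"
  then obtain i where i: "f = {xs!i, xs!Suc i}" "Suc i < length xs" by (auto simp: path_edges_def)
  have "distinct xs \<longrightarrow> xs!i \<noteq> xs!Suc i" using i(2) by (auto simp: nth_eq_iff_index_eq)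
  then show ?thesis using i by (intro exI[of _ "xs!i"] exI[of _ "xs!Suc i"]) auto
qed

lemma pe_disj: "distinct xs \<Longrightarrow> distinct ys \<Longrightarrow> set xs \<inter> set ys \<subseteq> {c} \<Longrightarrow> path_edges xs \<inter> path_edges ys = {}"
proof (rule ccontr)
  assume d: "distinct xs" "distinct ys" "set xs \<inter> set ys \<subseteq> {c}" "path_edges xs \<inter> path_edges ys \<noteq> {}"
  then obtain f where f: "f \<in> path_edges xs" "f \<in> path_edges ys" by blast
  from pe_edge[OF f(1)] d obtain a b where ab: "f = {a,b}" "a \<in> set xs" "b \<in> set xs" "a \<noteq> b" by blast
  from pe_edge[OF f(2)] obtain a' b' where "f = {a',b'}" "a' \<in> set ys" "b' \<in> set ys" by blast
  then have "a \<in> set ys" "b \<in> set ys" using ab by (auto simp: doubleton_eq_iff)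
  then show False using ab d(3) by blast
qed

lemma set_pe: "2 \<le> length xs \<Longrightarrow> set xs \<subseteq> \<Union>(path_edges xs)"
proof (induction xs rule: induct_list012)
  case (3 x y zs) then show ?case by (cases zs) auto
qed auto

lemma finite_pe[simp]: "finite (path_edges xs)"
  by (induction xs rule: induct_list012) auto

lemma walk_path: "xs \<noteq> [] \<Longrightarrow> \<exists>ys. ys \<noteq> [] \<and> distinct ys \<and> hd ys = hd xs \<and> last ys = last xs \<and>
   set ys \<subseteq> set xs \<and> path_edges ys \<subseteq> path_edges xs"
proof (induction "length xs" arbitrary: xs rule: less_induct)
  case less
  show ?case
  proof (cases "distinct xs")
    case True then show ?thesis using less by blast
  next
    case False
    then obtain as y bs cs where xs: "xs = as @ [y] @ bs @ [y] @ cs" using not_distinct_decomp by blast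
    let ?xs = "as @ y # cs"
    have "length ?xs < length xs" using xs by simp
    then obtain ys where ys: "ys \<noteq> []" "distinct ys" "hd ys = hd ?xs" "last ys = last ?xs"
      "set ys \<subseteq> set ?xs" "path_edges ys \<subseteq> path_edges ?xs" using less by blast
    have e1: "path_edges xs = path_edges (as @ [y]) \<union> path_edges (y # bs @ [y]) \<union> path_edges (y # cs)"
      using xs pe_mid[of as y "bs @ y # cs"] pe_mid[of "y # bs" y cs] by auto
    have e2: "path_edges ?xs = path_edges (as @ [y]) \<union> path_edges (y # cs)" by (rule pe_mid)
    have h1: "hd ?xs = hd xs" using xs by (cases as) auto
    have h2: "last ?xs = last xs" using xs by (cases cs) auto
    have h3: "set ?xs \<subseteq> set xs" using xs by auto
    have h4: "path_edges ?xs \<subseteq> path_edges xs" using e1 e2 by blast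
    have "set ys \<subseteq> set xs" using ys(5) h3 by (rule subset_trans)
    moreover have "path_edges ys \<subseteq> path_edges xs" using ys(6) h4 by (rule subset_trans)
    moreover have "hd ys = hd xs" using ys(3) h1 by (rule trans)
    moreover have "last ys = last xs" using ys(4) h2 by (rule trans)
    ultimately show ?thesis using ys(1,2) by blast
  qed
qed

lemma first_bad: "\<not> path_edges xs \<subseteq> A \<Longrightarrow> \<exists>p1 v u r. xs = p1 @ v # u # r \<and> path_edges (p1 @ [v]) \<subseteq> A \<and> {v,u} \<notin> A"
proof (induction xs rule: induct_list012)
  case (3 x y zs)
  show ?case
  proof (cases "{x,y} \<in> A")
    case False then show ?thesis by (rule_tac x="[]" in exI) auto
  next
    case True
    then have "\<not> path_edges (y # zs) \<subseteq> A" using 3 by auto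
    then obtain p1 v u r where h: "y # zs = p1 @ v # u # r" "path_edges (p1 @ [v]) \<subseteq> A" "{v,u} \<notin> A"
      using 3 by blast
    have "path_edges ((x # p1) @ [v]) \<subseteq> A"
      using h True by (cases p1) auto
    then show ?thesis using h by (rule_tac x="x#p1" in exI) auto
  qed
qed auto

lemma closing_notin: "distinct xs \<Longrightarrow> 3 \<le> length xs \<Longrightarrow> {last xs, hd xs} \<notin> path_edges xs"
proof
  assume d: "distinct xs" "3 \<le> length xs" "{last xs, hd xs} \<in> path_edges xs"
  then obtain i where i: "{last xs, hd xs} = {xs ! i, xs ! Suc i}" "Suc i < length xs"
    by (auto simp: path_edges_def)
  have "xs \<noteq> []" using d(2) by (cases xs) simp_all
  then have l: "last xs = xs ! (length xs - 1)" "hd xs = xs ! 0" by (auto simp: last_conv_nth hd_conv_nth)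
  from i l have "(xs ! (length xs - 1) = xs ! i \<and> xs ! 0 = xs ! Suc i) \<or> (xs ! (length xs - 1) = xs ! Suc i \<and> xs ! 0 = xs ! i)"
    by (auto simp: doubleton_eq_iff)
  then show False
  proof
    assume h: "xs ! (length xs - 1) = xs ! i \<and> xs ! 0 = xs ! Suc i"
    have "0 < length xs" using d(2) by linarith
    then have "0 = Suc i" using nth_eq_iff_index_eq[OF d(1), of 0 "Suc i"] i(2) h by blast
    then show False by simp
  next
    assume h: "xs ! (length xs - 1) = xs ! Suc i \<and> xs ! 0 = xs ! i"
    have l0: "0 < length xs" "length xs - 1 < length xs" "i < length xs" using d(2) i(2) by linarith+
    then have "0 = i" using nth_eq_iff_index_eq[OF d(1), of 0 i] h by blast
    moreover have "length xs - 1 = Suc i" using h nth_eq_iff_index_eq[OF d(1), of "length xs - 1" "Suc i"] i(2) l0 by blast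
    ultimately show False using d(2) by simp
  qed
qed

lemma adj_split: "f \<in> path_edges xs \<Longrightarrow> \<exists>l1 p q l2. xs = l1 @ p # q # l2 \<and> f = {p,q}"
proof (induction xs rule: induct_list012)
  case (3 x y zs)
  show ?case
  proof (cases "f = {x,y}")
    case True then show ?thesis by (rule_tac x="[]" in exI) auto
  next
    case False
    then obtain l1 p q l2 where "y # zs = l1 @ p # q # l2" "f = {p,q}" using 3 by auto
    then show ?thesis by (rule_tac x="x#l1" in exI) auto
  qed
qed auto

lemma two_split: "a \<in> set xs \<Longrightarrow> b \<in> set xs \<Longrightarrow> a \<noteq> b \<Longrightarrow>
  \<exists>l1 l2 l3. xs = l1 @ a # l2 @ b # l3 \<or> xs = l1 @ b # l2 @ a # l3"
proof -
  assume h: "a \<in> set xs" "b \<in> set xs" "a \<noteq> b"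
  obtain m1 m2 where m: "xs = m1 @ a # m2" using h split_list by fastforce
  show ?thesis
  proof (cases "b \<in> set m1")
    case True
    then obtain n1 n2 where "m1 = n1 @ b # n2" using split_list by fastforce
    then show ?thesis using m by (intro exI[of _ n1] exI[of _ n2] exI[of _ m2] disjI2) simp
  next
    case False
    then have "b \<in> set m2" using h m by auto
    then obtain n1 n2 where "m2 = n1 @ b # n2" using split_list by fastforce
    then show ?thesis using m by (intro exI[of _ m1] exI[of _ n1] exI[of _ n2] disjI1) simp
  qed
qed

lemma cyc_rot: "path_edges (l1 @ p # q # l2) \<union> {{last (l1 @ p # q # l2), hd (l1 @ p # q # l2)}}
   = path_edges (q # l2 @ l1 @ [p]) \<union> {{last (q # l2 @ l1 @ [p]), hd (q # l2 @ l1 @ [p])}}"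
proof -
  have a: "path_edges (l1 @ p # q # l2) = path_edges (l1 @ [p]) \<union> insert {p,q} (path_edges (q # l2))"
    using pe_mid[of l1 p "q # l2"] by simp
  have b: "path_edges ((q # l2) @ (l1 @ [p])) = path_edges (q # l2) \<union> path_edges (l1 @ [p]) \<union> {{last (q#l2), hd (l1 @ [p])}}"
  proof (cases l1)
    case Nil
    then show ?thesis using pe_snoc[of "q#l2" p] by auto
  next
    case (Cons c l1')
    have "path_edges ((q # l2) @ (c # l1' @ [p])) = path_edges ((q # l2) @ [c]) \<union> path_edges (c # l1' @ [p])"
      using pe_mid[of "q#l2" c "l1' @ [p]"] by simp
    then show ?thesis using Cons pe_snoc[of "q#l2" c] by auto
  qed
  have c: "last (l1 @ p # q # l2) = last (q#l2)" by (cases l2) auto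
  have d: "hd (l1 @ p # q # l2) = hd (l1 @ [p])" by (cases l1) auto
  show ?thesis using a b c d by (auto simp: insert_commute)
qed



lemma sum_Un_le: "finite A \<Longrightarrow> finite B \<Longrightarrow> (\<And>x. x \<in> A \<union> B \<Longrightarrow> 0 \<le> (f x::real)) \<Longrightarrow> sum f (A \<union> B) \<le> sum f A + sum f B"
proof -
  assume h: "finite A" "finite B" "\<And>x. x \<in> A \<union> B \<Longrightarrow> 0 \<le> (f x::real)"
  have "sum f (A \<union> B) = sum f A + sum f B - sum f (A \<inter> B)" using h by (rule_tac sum_Un) auto
  moreover have "0 \<le> sum f (A \<inter> B)" using h(3) by (intro sum_nonneg) auto
  ultimately show ?thesis by linarith
qed

lemma cycle_orient:
  assumes "rooted_cycle E e C"
  shows "\<exists>\<pi>. distinct \<pi> \<and> 3 \<le> length \<pi> \<and> C = path_edges \<pi> \<union> {e} \<and> {last \<pi>, hd \<pi>} = e \<and> C \<subseteq> E"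
proof -
  from assms obtain vs where vs: "distinct vs" "3 \<le> length vs" "C = path_edges vs \<union> {{last vs, hd vs}}"
    "C \<subseteq> E" "e \<in> C" unfolding rooted_cycle_def is_cycle_def by blast
  show ?thesis
  proof (cases "e = {last vs, hd vs}")
    case True then show ?thesis using vs by (intro exI[of _ vs]) auto
  next
    case False
    then have "e \<in> path_edges vs" using vs by auto
    then obtain l1 p q l2 where sp: "vs = l1 @ p # q # l2" "e = {p,q}" using adj_split by blast
    let ?\<pi> = "q # l2 @ l1 @ [p]"
    have c: "C = path_edges ?\<pi> \<union> {{last ?\<pi>, hd ?\<pi>}}" using vs(3) sp cyc_rot[of l1 p q l2] by simp
    have "{last ?\<pi>, hd ?\<pi>} = e" using sp by (simp add: insert_commute)
    moreover have "distinct ?\<pi>" using vs(1) sp by auto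
    moreover have "length ?\<pi> = length vs" using sp by simp
    ultimately show ?thesis using c vs by (intro exI[of _ ?\<pi>]) auto
  qed
qed



lemma core:
  fixes w :: "'v set \<Rightarrow> real"
  assumes pos: "positive_weights E w"
    and rho: "distinct \<rho>" "3 \<le> length \<rho>" "C = path_edges \<rho> \<union> {e}" "{last \<rho>, hd \<rho>} = e"
      "\<rho> = l1 @ v # l2 @ y # l3" "set \<rho> \<subseteq> V" "C \<subseteq> E"
    and P: "is_path V E P" "P = p1 @ v # g @ y # p3" "set g \<inter> set \<rho> = {}"
    and eA: "e \<in> A" and fA: "{v, hd (g @ [y])} \<notin> A" and CA: "C \<subseteq> A"
    and gmin: "\<And>D. is_cycle E D \<Longrightarrow> e \<in> D \<Longrightarrow> {v, hd (g @ [y])} \<in> D \<Longrightarrow> weight w C \<le> weight w D"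
    and una: "\<And>D. is_cycle E D \<Longrightarrow> D \<noteq> C \<Longrightarrow> weight w D \<noteq> weight w C"
  shows "\<exists>P'. is_path V E P' \<and> hd P' = hd P \<and> last P' = last P \<and>
           weight w (path_edges P') < weight w (path_edges P)"
proof -
  define f where "f = {v, hd (g @ [y])}"
  define \<delta> where "\<delta> = l1 @ v # g @ y # l3"
  define \<sigma> where "\<sigma> = v # l2 @ [y]"
  define \<gamma> where "\<gamma> = v # g @ [y]"
  define W where "W = p1 @ v # l2 @ y # p3"
  have nn: "\<And>x. x \<in> E \<Longrightarrow> 0 \<le> w x" using pos unfolding positive_weights_def by (simp add: less_imp_le)
  have dP: "distinct P" "set P \<subseteq> V" "path_edges P \<subseteq> E" using P(1) unfolding is_path_def by auto
  have split3: "\<And>a b c (d::'v) q s. path_edges (a @ b # c @ d # q) = path_edges (a @ [b]) \<union> path_edges (b # c @ [d]) \<union> path_edges (d # q)"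
  proof -
    fix a b c d q
    have "path_edges (a @ b # c @ d # q) = path_edges (a @ [b]) \<union> path_edges (b # c @ d # q)" by (rule pe_mid)
    moreover have "path_edges ((b # c) @ d # q) = path_edges ((b # c) @ [d]) \<union> path_edges (d # q)" by (rule pe_mid)
    ultimately show "path_edges (a @ b # c @ d # q) = path_edges (a @ [b]) \<union> path_edges (b # c @ [d]) \<union> path_edges (d # q)" by (simp add: Un_assoc)
  qed
  have peR: "path_edges \<rho> = path_edges (l1 @ [v]) \<union> path_edges \<sigma> \<union> path_edges (y # l3)"
    using rho(5) split3 \<sigma>_def by simp
  have peD: "path_edges \<delta> = path_edges (l1 @ [v]) \<union> path_edges \<gamma> \<union> path_edges (y # l3)"
    using split3 \<delta>_def \<gamma>_def by simp
  have peP: "path_edges P = path_edges (p1 @ [v]) \<union> path_edges \<gamma> \<union> path_edges (y # p3)"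
    using P(2) split3 \<gamma>_def by simp
  have peW: "path_edges W = path_edges (p1 @ [v]) \<union> path_edges \<sigma> \<union> path_edges (y # p3)"
    using split3 W_def \<sigma>_def by simp
  have dr: "distinct (l1 @ [v])" "distinct \<sigma>" "distinct (y # l3)"
    "set (l1 @ [v]) \<inter> set \<sigma> \<subseteq> {v}" "set (y # l3) \<inter> set \<sigma> \<subseteq> {y}"
    using rho(1) rho(5) unfolding \<sigma>_def by auto
  have dp: "distinct (p1 @ [v])" "distinct \<gamma>" "distinct (y # p3)"
    "set (p1 @ [v]) \<inter> set \<gamma> \<subseteq> {v}" "set (y # p3) \<inter> set \<gamma> \<subseteq> {y}"
    "set (p1 @ [v]) \<inter> set (y # p3) \<subseteq> {v}"
    using dP(1) P(2) unfolding \<gamma>_def by auto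
  have sg: "set g \<inter> set \<rho> = {}" by (rule P(3))
  have vy: "v \<noteq> y" using rho(1,5) by auto
  have hdD: "hd \<delta> = hd \<rho>" using rho(5) \<delta>_def by (cases l1) auto
  have lastD: "last \<delta> = last \<rho>" using rho(5) \<delta>_def by (cases l3) auto
  have distD: "distinct \<delta>"
  proof -
    have "distinct (l1 @ v # l2 @ y # l3)" using rho by simp
    moreover have "distinct (v # g @ [y])" using dp(2) \<gamma>_def by simp
    moreover have "set g \<inter> set (l1 @ v # l2 @ y # l3) = {}" using sg rho(5) by simp
    ultimately show ?thesis unfolding \<delta>_def by auto
  qed
  have fgam: "f \<in> path_edges \<gamma>" unfolding f_def \<gamma>_def by (simp add: pe_Cons)
  have fnA: "f \<notin> A" using fA f_def by simp
  have lenD: "3 \<le> length \<delta>"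
  proof (rule ccontr)
    assume "\<not> 3 \<le> length \<delta>"
    then have "l1 = []" "g = []" "l3 = []" unfolding \<delta>_def by (simp_all add: le_simps)
    then have "f = e" using rho(4,5) f_def by (auto simp: insert_commute)
    then show False using eA fnA by simp
  qed
  define D where "D = path_edges \<delta> \<union> {e}"
  have gE: "path_edges \<gamma> \<subseteq> E" using peP dP(3) by auto
  have sE: "path_edges \<sigma> \<subseteq> E" using peR rho(3,7) by auto
  have DE: "D \<subseteq> E" using peD peR rho(3,7) gE D_def by auto
  have cycD: "is_cycle E D" unfolding is_cycle_def
    using distD lenD DE hdD lastD rho(4) D_def by (intro conjI exI[of _ \<delta>]) auto
  have fD: "f \<in> D" using fgam peD D_def by auto
  have "weight w C \<le> weight w D" using gmin[OF cycD] fD f_def D_def by auto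
  moreover have "D \<noteq> C" using fD fnA CA by auto
  ultimately have CD: "weight w C < weight w D" using una[OF cycD] by force
  define Oo where "Oo = path_edges (l1 @ [v]) \<union> path_edges (y # l3) \<union> {e}"
  have C_eq: "C = Oo \<union> path_edges \<sigma>" using rho(3) peR Oo_def by auto
  have D_eq: "D = Oo \<union> path_edges \<gamma>" using D_def peD Oo_def by auto
  have eS: "e \<notin> path_edges \<sigma>" using closing_notin[OF rho(1,2)] rho(4) peR by auto
  have OS: "Oo \<inter> path_edges \<sigma> = {}"
    using pe_disj[OF dr(1) dr(2) dr(4)] pe_disj[OF dr(3) dr(2) dr(5)] eS Oo_def by auto
  have OE: "Oo \<subseteq> E" using Oo_def C_eq rho(7) by auto
  have wC: "weight w C = weight w Oo + weight w (path_edges \<sigma>)"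
    unfolding weight_def C_eq using OS Oo_def by (intro sum.union_disjoint) auto
  have wD: "weight w D \<le> weight w Oo + weight w (path_edges \<gamma>)"
    unfolding weight_def D_eq using OE gE nn Oo_def by (intro sum_Un_le) auto
  have sg_lt: "weight w (path_edges \<sigma>) < weight w (path_edges \<gamma>)" using CD wC wD by linarith
  have d1: "path_edges (p1 @ [v]) \<inter> path_edges \<gamma> = {}" by (rule pe_disj[OF dp(1) dp(2) dp(4)])
  have d2: "(path_edges (p1 @ [v]) \<union> path_edges \<gamma>) \<inter> path_edges (y # p3) = {}"
    using pe_disj[OF dp(3) dp(2) dp(5)] pe_disj[OF dp(1) dp(3) dp(6)] by auto
  have wP: "weight w (path_edges P) = weight w (path_edges (p1 @ [v])) + weight w (path_edges \<gamma>) + weight w (path_edges (y # p3))"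
  proof -
    have "weight w (path_edges P) = sum w (path_edges (p1 @ [v]) \<union> path_edges \<gamma>) + sum w (path_edges (y # p3))"
      unfolding weight_def peP using d2 by (intro sum.union_disjoint) auto
    moreover have "sum w (path_edges (p1 @ [v]) \<union> path_edges \<gamma>) = sum w (path_edges (p1 @ [v])) + sum w (path_edges \<gamma>)"
      using d1 by (intro sum.union_disjoint) auto
    ultimately show ?thesis unfolding weight_def by simp
  qed
  have p1E: "path_edges (p1 @ [v]) \<subseteq> E" "path_edges (y # p3) \<subseteq> E" using peP dP(3) by auto
  have WE: "path_edges W \<subseteq> E" using peW p1E sE by auto
  have wW: "weight w (path_edges W) \<le> weight w (path_edges (p1 @ [v])) + weight w (path_edges \<sigma>) + weight w (path_edges (y # p3))"
  proof -
    have "sum w (path_edges W) \<le> sum w (path_edges (p1 @ [v]) \<union> path_edges \<sigma>) + sum w (path_edges (y # p3))"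
      unfolding peW using nn p1E sE by (intro sum_Un_le) auto
    moreover have "sum w (path_edges (p1 @ [v]) \<union> path_edges \<sigma>) \<le> sum w (path_edges (p1 @ [v])) + sum w (path_edges \<sigma>)"
      using nn p1E sE by (intro sum_Un_le) auto
    ultimately show ?thesis unfolding weight_def by simp
  qed
  have Wne: "W \<noteq> []" using W_def by simp
  obtain P' where P': "P' \<noteq> []" "distinct P'" "hd P' = hd W" "last P' = last W" "set P' \<subseteq> set W"
    "path_edges P' \<subseteq> path_edges W" using walk_path[OF Wne] by blast
  have hdW: "hd W = hd P" using W_def P(2) by (cases p1) auto
  have lastW: "last W = last P" using W_def P(2) by (cases p3) auto
  have setW: "set W \<subseteq> V" using W_def P(2) dP(2) rho(5,6) by auto
  have wP': "weight w (path_edges P') \<le> weight w (path_edges W)"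
    unfolding weight_def using P'(6) WE nn by (intro sum_mono2) auto
  have "is_path V E P'" unfolding is_path_def using P' setW WE by auto
  moreover have "weight w (path_edges P') < weight w (path_edges P)" using wP' wW wP sg_lt by linarith
  ultimately show ?thesis using P'(3,4) hdW lastW by auto
qed



lemma wf_edge: "wf_graph V E \<Longrightarrow> f \<in> E \<Longrightarrow> \<exists>a b. f = {a,b} \<and> a \<in> V \<and> b \<in> V \<and> a \<noteq> b"
  unfolding wf_graph_def by blast

lemma improve:
  fixes w :: "'v set \<Rightarrow> real"
  assumes wf: "wf_graph V E" and pos: "positive_weights E w" and unam: "unambiguous V E w"
    and greedy: "greedy_cycle_seq E {t1,t2} w Cs" and i: "i \<le> length Cs"
    and P: "is_path V E P" "hd P \<in> \<Union>(ambit Cs i)" "last P \<in> {t1,t2}" "\<not> path_edges P \<subseteq> ambit Cs i"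
  shows "\<exists>P'. is_path V E P' \<and> hd P' = hd P \<and> last P' = last P \<and>
           weight w (path_edges P') < weight w (path_edges P)"
proof -
  define A where "A = ambit Cs i"
  define e where "e = {t1, t2}"
  obtain p1 v u r where Pd: "P = p1 @ v # u # r" "path_edges (p1 @ [v]) \<subseteq> A" "{v,u} \<notin> A"
    using first_bad[OF P(4)] A_def by blast
  have vA: "v \<in> \<Union>A"
  proof (cases "p1 = []")
    case True then show ?thesis using P(2) Pd(1) A_def by simp
  next
    case False
    then have "{last p1, v} \<in> A" using Pd(2) pe_snoc[of p1 v] by auto
    then show ?thesis by blast
  qed
  then obtain X C where XC: "v \<in> X" "X \<in> C" "C \<in> set (take i Cs)" using A_def unfolding ambit_def by auto
  then obtain j where j: "j < length (take i Cs)" "C = take i Cs ! j" by (auto simp: in_set_conv_nth)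
  have ji: "j < i" "j < length Cs" "C = Cs ! j" using j by auto
  have rc: "rooted_cycle E e C" and
    gm: "\<And>D. rooted_cycle E e D \<Longrightarrow> \<not> D \<subseteq> \<Union>(set (take j Cs)) \<Longrightarrow> weight w C \<le> weight w D"
    using greedy ji unfolding greedy_cycle_seq_def e_def by auto
  have CA: "C \<subseteq> A" using XC(3) unfolding A_def ambit_def by auto
  have jA: "\<Union>(set (take j Cs)) \<subseteq> A" using set_take_subset_set_take[of j i Cs] ji(1) unfolding A_def ambit_def by auto
  have eC: "e \<in> C" using rc unfolding rooted_cycle_def by simp
  have cycC: "is_cycle E C" using rc unfolding rooted_cycle_def by simp
  obtain \<pi> where pi: "distinct \<pi>" "3 \<le> length \<pi>" "C = path_edges \<pi> \<union> {e}" "{last \<pi>, hd \<pi>} = e" "C \<subseteq> E"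
    using cycle_orient[OF rc] by blast
  have pine: "\<pi> \<noteq> []" using pi(2) by (cases \<pi>) simp_all
  have piV: "set \<pi> \<subseteq> V"
  proof
    fix x assume "x \<in> set \<pi>"
    then have "x \<in> \<Union>(path_edges \<pi>)" using set_pe[of \<pi>] pi(2) by auto
    then obtain f where "f \<in> E" "x \<in> f" using pi(3,5) by auto
    then show "x \<in> V" using wf_edge[OF wf] by blast
  qed
  have vpi: "v \<in> set \<pi>"
  proof (cases "X = e")
    case True then show ?thesis using pi(4) XC(1) pine by auto
  next
    case False
    then have "X \<in> path_edges \<pi>" using XC(2) pi(3) by auto
    then show ?thesis using pe_edge XC(1) by blast
  qed
  have "last P \<in> {last \<pi>, hd \<pi>}" using P(3) pi(4) e_def by simp
  then have lastP: "last P \<in> set \<pi>" using pine by auto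
  have "last P = last (u # r)" using Pd(1) by simp
  then have "\<exists>x\<in>set (u # r). x \<in> set \<pi>" using lastP by (metis last_in_set list.distinct(1))
  then obtain g y p3 where ur: "u # r = g @ y # p3" "y \<in> set \<pi>" "\<forall>x\<in>set g. x \<notin> set \<pi>"
    using split_list_first_prop[of "u # r" "\<lambda>x. x \<in> set \<pi>"] by blast
  have P2: "P = p1 @ v # g @ y # p3" using Pd(1) ur(1) by simp
  have hdu: "hd (g @ [y]) = u" using ur(1) by (cases g) auto
  have dP: "distinct P" using P(1) unfolding is_path_def by simp
  have vy: "v \<noteq> y" using dP P2 by auto
  obtain l1 l2 l3 where sp: "\<pi> = l1 @ v # l2 @ y # l3 \<or> \<pi> = l1 @ y # l2 @ v # l3"
    using two_split[OF vpi ur(2) vy] by blast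
  obtain \<rho> m1 m2 m3 where rho: "distinct \<rho>" "3 \<le> length \<rho>" "C = path_edges \<rho> \<union> {e}" "{last \<rho>, hd \<rho>} = e"
      "\<rho> = m1 @ v # m2 @ y # m3" "set \<rho> = set \<pi>"
  proof (cases "\<pi> = l1 @ v # l2 @ y # l3")
    case True then show ?thesis using that pi by blast
  next
    case False
    then have "\<pi> = l1 @ y # l2 @ v # l3" using sp by simp
    then have r0: "rev \<pi> = rev l3 @ v # rev l2 @ y # rev l1" by simp
    have r4: "{last (rev \<pi>), hd (rev \<pi>)} = e" using pi(4) pine by (simp add: hd_rev last_rev insert_commute)
    have r1: "distinct (rev \<pi>)" using pi(1) by simp
    have r2: "3 \<le> length (rev \<pi>)" using pi(2) by simp
    have r3: "C = path_edges (rev \<pi>) \<union> {e}" using pi(3) by simp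
    have r5: "set (rev \<pi>) = set \<pi>" by simp
    show ?thesis by (rule that[OF r1 r2 r3 r4 r0 r5])
  qed
  have eA: "e \<in> A" using eC CA by auto
  have fA: "{v, hd (g @ [y])} \<notin> A" using Pd(3) hdu by simp
  show ?thesis
  proof (rule core[where C=C and e=e and A=A, OF pos rho(1-5)])
    show "set \<rho> \<subseteq> V" using rho(6) piV by simp
    show "C \<subseteq> E" by (rule pi(5))
    show "is_path V E P" by (rule P(1))
    show "P = p1 @ v # g @ y # p3" by (rule P2)
    show "set g \<inter> set \<rho> = {}" using ur(3) rho(6) by auto
    show "e \<in> A" by (rule eA)
    show "{v, hd (g @ [y])} \<notin> A" by (rule fA)
    show "C \<subseteq> A" by (rule CA)
    show "weight w C \<le> weight w D" if "is_cycle E D" "e \<in> D" "{v, hd (g @ [y])} \<in> D" for D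
      using gm[of D] that fA jA unfolding rooted_cycle_def by blast
    show "weight w D \<noteq> weight w C" if "is_cycle E D" "D \<noteq> C" for D
      using unam that cycC unfolding unambiguous_def by metis
  qed
qed



lemma p2core:
  fixes w w' :: "'v set \<Rightarrow> real"
  assumes wf: "wf_graph V E" and pos: "positive_weights E w" and unam: "unambiguous V E w"
    and greedy: "greedy_cycle_seq E {t1,t2} w Cs" and i: "i \<le> length Cs"
    and uvA: "{u,v} \<in> ambit Cs i" and z: "z \<notin> V"
    and E'eq: "E' = (E - {{u,v}}) \<union> {{z,u},{z,v}}"
    and w'eq: "\<And>f. f \<in> E - {{u,v}} \<Longrightarrow> w' f = w f" and wa: "w' {z,u} = a" and wb: "w' {z,v} = b"
    and ab: "0 < a" "0 < b" "a + b = w {u,v}"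
    and t: "t \<in> {t1,t2}"
    and sp: "shortest_path (insert z V) E' w' z t (z # u # r)"
  shows "path_edges (u # r) \<subseteq> ambit Cs i"
proof (rule ccontr)
  assume nA: "\<not> path_edges (u # r) \<subseteq> ambit Cs i"
  define p where "p = z # u # r"
  have pp: "is_path (insert z V) E' p" "last p = t"
    and pmin: "\<And>q. is_path (insert z V) E' q \<Longrightarrow> hd q = z \<Longrightarrow> last q = t \<Longrightarrow> weight w' (path_edges p) \<le> weight w' (path_edges q)"
    using sp unfolding shortest_path_def p_def by auto
  have dp: "distinct p" "set p \<subseteq> insert z V" "path_edges p \<subseteq> E'" using pp(1) unfolding is_path_def by auto
  have zn: "z \<notin> set (u # r)" using dp(1) p_def by simp
  have urV: "set (u # r) \<subseteq> V" using dp(2) zn p_def by auto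
  have noz: "\<And>f xs. f \<in> path_edges xs \<Longrightarrow> z \<notin> set xs \<Longrightarrow> z \<notin> f"
    using pe_edge by fastforce
  have EV: "\<And>f. f \<in> E \<Longrightarrow> z \<notin> f" using wf_edge[OF wf] z by blast
  have peur: "path_edges (u # r) \<subseteq> E - {{u,v}}"
  proof
    fix f assume f: "f \<in> path_edges (u # r)"
    then have "f \<in> E'" using dp(3) p_def by (cases r) auto
    moreover have "z \<notin> f" using noz[OF f zn] .
    ultimately show "f \<in> E - {{u,v}}" using E'eq by auto
  qed
  have ur_path: "is_path V E (u # r)" unfolding is_path_def using dp(1) urV peur p_def by auto
  have uA: "hd (u # r) \<in> \<Union>(ambit Cs i)" using uvA by auto
  have lur: "last (u # r) \<in> {t1,t2}" using pp(2) t p_def by simp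
  obtain P' where P': "is_path V E P'" "hd P' = u" "last P' = t"
    "weight w (path_edges P') < weight w (path_edges (u # r))"
    using improve[OF wf pos unam greedy i ur_path uA lur nA] pp(2) p_def by auto
  have dP': "P' \<noteq> []" "distinct P'" "set P' \<subseteq> V" "path_edges P' \<subseteq> E" using P'(1) unfolding is_path_def by auto
  have zP': "z \<notin> set P'" using dP'(3) z by auto
  have sumeq: "\<And>F. F \<subseteq> E - {{u,v}} \<Longrightarrow> weight w' F = weight w F"
    unfolding weight_def by (rule sum.cong) (use w'eq in blast)+
  have wp: "weight w' (path_edges p) = a + weight w (path_edges (u # r))"
  proof -
    have "path_edges p = insert {z,u} (path_edges (u # r))" using p_def by simp
    moreover have "{z,u} \<notin> path_edges (u # r)" using noz[OF _ zn] by blast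
    ultimately have "weight w' (path_edges p) = w' {z,u} + weight w' (path_edges (u # r))"
      unfolding weight_def by simp
    then show ?thesis using wa sumeq[OF peur] by simp
  qed
  show False
  proof (cases "{u,v} \<in> path_edges P'")
    case False
    define q where "q = z # P'"
    have peP': "path_edges P' \<subseteq> E - {{u,v}}" using False dP'(4) by auto
    have peq: "path_edges q = insert {z,u} (path_edges P')" using q_def pe_Cons[OF dP'(1)] P'(2) by simp
    have "is_path (insert z V) E' q" unfolding is_path_def using dP' zP' peq peP' E'eq q_def by auto
    moreover have "hd q = z" "last q = t" using q_def P'(3) dP'(1) by auto
    ultimately have le: "weight w' (path_edges p) \<le> weight w' (path_edges q)" using pmin by blast
    have "{z,u} \<notin> path_edges P'" using noz[OF _ zP'] by blast
    then have "weight w' (path_edges q) = w' {z,u} + weight w' (path_edges P')"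
      unfolding weight_def peq by simp
    then have "weight w' (path_edges q) = a + weight w (path_edges P')" using wa sumeq[OF peP'] by simp
    then show False using le wp P'(4) by linarith
  next
    case True
    obtain ys where ys: "P' = u # ys" using dP'(1) P'(2) by (cases P') auto
    have ysne: "ys \<noteq> []" using True ys by auto
    have peP'': "path_edges P' = insert {u, hd ys} (path_edges ys)" using ys pe_Cons[OF ysne] by simp
    have uys: "u \<notin> set ys" using dP'(2) ys by simp
    have "{u,v} \<notin> path_edges ys"
    proof
      assume "{u,v} \<in> path_edges ys"
      then obtain a' b' where "{u,v} = {a',b'}" "a' \<in> set ys" "b' \<in> set ys" using pe_edge by blast
      then have "u \<in> set ys" by (auto simp: doubleton_eq_iff)
      then show False using uys by simp
    qed
    then have "{u,v} = {u, hd ys}" using True peP'' by auto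
    moreover have "hd ys \<noteq> u" using uys ysne by (metis hd_in_set)
    ultimately have vh: "v = hd ys" by (auto simp: doubleton_eq_iff)
    then obtain R where R: "ys = v # R" using ysne by (cases ys) auto
    have uvR: "{u,v} \<notin> path_edges (v # R)" using \<open>{u,v} \<notin> path_edges ys\<close> R by simp
    have peVR: "path_edges (v # R) \<subseteq> E - {{u,v}}" using uvR dP'(4) ys R by auto
    have wP'eq: "weight w (path_edges P') = w {u,v} + weight w (path_edges (v # R))"
      unfolding weight_def using ys R uvR by simp
    define q where "q = z # v # R"
    have peq: "path_edges q = insert {z,v} (path_edges (v # R))" using q_def by simp
    have "is_path (insert z V) E' q" unfolding is_path_def using dP' zP' peq peVR E'eq q_def ys R by auto
    moreover have "hd q = z" "last q = t" using q_def P'(3) ys R by auto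
    ultimately have le: "weight w' (path_edges p) \<le> weight w' (path_edges q)" using pmin by blast
    have "{z,v} \<notin> path_edges (v # R)" using noz[of _ "v # R"] zP' ys R by auto
    then have "weight w' (path_edges q) = w' {z,v} + weight w' (path_edges (v # R))"
      unfolding weight_def peq by simp
    then have "weight w' (path_edges q) = b + weight w (path_edges (v # R))" using wb sumeq[OF peVR] by simp
    then show False using le wp P'(4) wP'eq ab by linarith
  qed
qed



theorem lemma2:
  fixes V :: "'v set" and E :: "'v set set" and w :: "'v set \<Rightarrow> real"
    and t1 t2 :: 'v and Cs :: "'v set set list" and i :: nat
  assumes "wf_graph V E"
    and "two_connected V E"
    and "positive_weights E w"
    and "unambiguous V E w"
    and "t1 \<noteq> t2" and "{t1, t2} \<in> E"
    and "greedy_cycle_seq E {t1, t2} w Cs"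
    and "1 \<le> i" and "i \<le> length Cs"
  shows "(\<forall>x \<in> \<Union>(ambit Cs i). \<forall>t \<in> {t1, t2}. \<forall>p.
            shortest_path V E w x t p \<longrightarrow> path_in p (ambit Cs i))
       \<and> (\<forall>u v z a. {u, v} \<in> ambit Cs i \<and> z \<notin> V \<and> 0 < a \<and> a < w {u, v} \<longrightarrow>
            (\<forall>t \<in> {t1, t2}. \<forall>p.
               shortest_path (insert z V) (subdiv_edges E u v z) (subdiv_weight w u v z a) z t p
               \<longrightarrow> path_in p (subdiv_edges (ambit Cs i) u v z)))"
proof -
  note wf = assms(1) and pos = assms(3) and unam = assms(4) and greedy = assms(7) and ii = assms(9)
  define A where "A = ambit Cs i"
  have AE: "A \<subseteq> E"
  proof
    fix f assume "f \<in> A"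
    then obtain C where "f \<in> C" "C \<in> set (take i Cs)" unfolding A_def ambit_def by auto
    then obtain j where "j < length Cs" "C = Cs ! j" by (auto simp: in_set_conv_nth)
    then have "rooted_cycle E {t1,t2} C" using greedy unfolding greedy_cycle_seq_def by auto
    then show "f \<in> E" using \<open>f \<in> C\<close> unfolding rooted_cycle_def is_cycle_def by auto
  qed
  have part1: "path_in p A" if x: "x \<in> \<Union>A" and t: "t \<in> {t1,t2}" and sp: "shortest_path V E w x t p" for x t p
  proof -
    have pp: "is_path V E p" "hd p = x" "last p = t"
      and pmin: "\<And>q. is_path V E q \<Longrightarrow> hd q = x \<Longrightarrow> last q = t \<Longrightarrow> weight w (path_edges p) \<le> weight w (path_edges q)"
      using sp unfolding shortest_path_def by auto
    have peA: "path_edges p \<subseteq> A"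
    proof (rule ccontr)
      assume "\<not> path_edges p \<subseteq> A"
      then obtain P' where "is_path V E P'" "hd P' = hd p" "last P' = last p"
        "weight w (path_edges P') < weight w (path_edges p)"
        using improve[OF wf pos unam greedy ii pp(1)] pp x t A_def by auto
      then show False using pmin[of P'] pp by fastforce
    qed
    have "set p \<subseteq> \<Union>A"
    proof (cases "2 \<le> length p")
      case True then show ?thesis using set_pe[OF True] peA by blast
    next
      case False
      have "p \<noteq> []" using pp(1) unfolding is_path_def by simp
      then have "p = [x]" using False pp(2) by (cases p) (auto simp: Suc_le_eq)
      then show ?thesis using x by simp
    qed
    then show ?thesis unfolding path_in_def using peA by simp
  qed
  have part2: "path_in p (subdiv_edges A u v z)"
    if uv: "{u, v} \<in> A" and z: "z \<notin> V" and a: "0 < a" "a < w {u, v}" and t: "t \<in> {t1,t2}"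
      and sp: "shortest_path (insert z V) (subdiv_edges E u v z) (subdiv_weight w u v z a) z t p" for u v z a t p
  proof -
    define b where "b = w {u,v} - a"
    define E' where "E' = subdiv_edges E u v z"
    define w' where "w' = subdiv_weight w u v z a"
    have uvE: "{u,v} \<in> E" using uv AE by auto
    have uvV: "u \<in> V" "v \<in> V" "u \<noteq> v" using wf_edge[OF wf uvE] by (auto simp: doubleton_eq_iff)
    have tV: "t1 \<in> V" "t2 \<in> V" using wf_edge[OF wf assms(6)] by (auto simp: doubleton_eq_iff)
    have zuv: "z \<noteq> u" "z \<noteq> v" using z uvV by auto
    have EV: "\<And>f. f \<in> E \<Longrightarrow> z \<notin> f" using wf_edge[OF wf] z by blast
    have E'eq: "E' = (E - {{u,v}}) \<union> {{z,u},{z,v}}" unfolding E'_def subdiv_edges_def by (auto simp: insert_commute)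
    have E'eq2: "E' = (E - {{v,u}}) \<union> {{z,v},{z,u}}" using E'eq by (auto simp: insert_commute)
    have neq: "{u,z} \<noteq> {z,v}" using uvV(3) zuv by (auto simp: doubleton_eq_iff)
    have w'eq: "\<And>f. f \<in> E - {{u,v}} \<Longrightarrow> w' f = w f"
    proof -
      fix f assume f: "f \<in> E - {{u,v}}"
      then have "z \<notin> f" using EV by auto
      then have "f \<noteq> {u,z}" "f \<noteq> {z,v}" by auto
      then show "w' f = w f" unfolding w'_def subdiv_weight_def by simp
    qed
    have w'eq2: "\<And>f. f \<in> E - {{v,u}} \<Longrightarrow> w' f = w f" using w'eq by (simp add: insert_commute)
    have wa: "w' {z,u} = a" unfolding w'_def subdiv_weight_def using neq by (simp add: insert_commute)
    have wb: "w' {z,v} = b" unfolding w'_def subdiv_weight_def b_def by simp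
    have ab: "0 < a" "0 < b" "a + b = w {u,v}" using a b_def by auto
    have pp: "is_path (insert z V) E' p" "hd p = z" "last p = t"
      using sp unfolding shortest_path_def E'_def w'_def by auto
    have dp: "p \<noteq> []" "distinct p" "path_edges p \<subseteq> E'" using pp(1) unfolding is_path_def by auto
    have tz: "t \<noteq> z" using t tV z by auto
    obtain c r where pc: "p = z # c # r" using dp(1) pp(2,3) tz by (cases p; cases "tl p") auto
    have zc: "{z,c} \<in> E'" using dp(3) pc by simp
    have "{z,c} \<notin> E" using EV by auto
    then have "{z,c} = {z,u} \<or> {z,c} = {z,v}" using zc E'eq by auto
    then have cuv: "c = u \<or> c = v" by (auto simp: doubleton_eq_iff)
    have sp': "shortest_path (insert z V) E' w' z t (z # c # r)" using sp pc E'_def w'_def by simp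
    have peA: "path_edges (c # r) \<subseteq> A"
    proof (cases "c = u")
      case True
      show ?thesis using p2core[OF wf pos unam greedy ii _ z E'eq w'eq wa wb ab t] sp' True uv A_def by simp
    next
      case False
      then have cv: "c = v" using cuv by simp
      have uv2: "{v,u} \<in> ambit Cs i" using uv A_def by (simp add: insert_commute)
      have ab2: "0 < b" "0 < a" "b + a = w {v,u}" using ab by (auto simp: insert_commute)
      show ?thesis using p2core[OF wf pos unam greedy ii uv2 z E'eq2 w'eq2 wb wa ab2 t] sp' cv A_def by simp
    qed
    have uvE': "{u,v} \<notin> E'" using E'eq zuv by (auto simp: doubleton_eq_iff)
    have pecr: "path_edges (c # r) \<subseteq> A - {{u,v}}" using peA dp(3) pc uvE' by (cases r) auto
    have zcS: "{z,c} \<in> {{u,z},{z,v}}" using cuv by (auto simp: insert_commute)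
    have peS: "path_edges p \<subseteq> subdiv_edges A u v z" using pc pecr zcS unfolding subdiv_edges_def by (cases r) auto
    have setS: "set p \<subseteq> \<Union>(subdiv_edges A u v z)"
    proof
      fix x assume "x \<in> set p"
      then have "x = z \<or> x = c \<or> x \<in> set (c # r)" using pc by auto
      moreover have "z \<in> \<Union>(subdiv_edges A u v z)" "c \<in> \<Union>(subdiv_edges A u v z)"
        using zcS unfolding subdiv_edges_def by auto
      moreover have "set (c # r) \<subseteq> \<Union>(subdiv_edges A u v z)"
      proof (cases r)
        case Nil then show ?thesis using \<open>c \<in> \<Union>(subdiv_edges A u v z)\<close> by simp
      next
        case (Cons d r')
        then have "set (c # r) \<subseteq> \<Union>(path_edges (c # r))" using set_pe[of "c # r"] by simp
        then show ?thesis using pecr unfolding subdiv_edges_def by blast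
      qed
      ultimately show "x \<in> \<Union>(subdiv_edges A u v z)" by blast
    qed
    show ?thesis unfolding path_in_def using peS setS by simp
  qed
  show ?thesis
  proof (intro conjI ballI allI impI)
    fix x t p assume "x \<in> \<Union>(ambit Cs i)" "t \<in> {t1,t2}" "shortest_path V E w x t p"
    then show "path_in p (ambit Cs i)" using part1[of x t p] A_def by simp
  next
    fix u v z a t p
    assume h: "{u, v} \<in> ambit Cs i \<and> z \<notin> V \<and> 0 < a \<and> a < w {u, v}" "t \<in> {t1,t2}"
      "shortest_path (insert z V) (subdiv_edges E u v z) (subdiv_weight w u v z a) z t p"
    then show "path_in p (subdiv_edges (ambit Cs i) u v z)" using part2[of u v z a t p] A_def by simp
  qed
qed

end
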